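(* Let $\sigma$ be a strongly convex rational polyhedral cone with $\operatorname{ns}(\sigma)>0$. Then there is a unique face $\tau$ of $\sigma$ which is minimal (with respect to inclusion) among the faces $\tau'$ of $\sigma$ satisfying $\operatorname{ns}(\tau')=\operatorname{ns}(\sigma)$.
   Context: For a strongly convex rational polyhedral cone $\sigma\subset\mathbb{R}^n$, $\sigma(1)$ denotes its set of rays (one-dimensional faces) and $\dim\sigma$ the dimension of the linear subspace spanned by $\sigma$. The non-simplicial index of $\sigma$ is $\operatorname{ns}(\sigma)=|\sigma(1)|-\dim\sigma$; thus $\sigma$ is simplicial iff $\operatorname{ns}(\sigma)=0$. *)

theory Defs
  imports "HOL-Analysis.Analysis"
begin

definition rational_vec :: "real ^ 'n \<Rightarrow> bool" where
  "rational_vec v \<longleftrightarrow> (\<forall>i. v $ i \<in> \<rat>)"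

definition rat_poly_cone :: "(real ^ 'n) set \<Rightarrow> bool" where
  "rat_poly_cone \<sigma> \<longleftrightarrow> (\<exists>V. finite V \<and> (\<forall>v\<in>V. rational_vec v) \<and>
      \<sigma> = {x. \<exists>c. (\<forall>v\<in>V. c v \<ge> 0) \<and> x = (\<Sum>v\<in>V. c v *\<^sub>R v)})"

definition strongly_convex :: "(real ^ 'n) set \<Rightarrow> bool" where
  "strongly_convex \<sigma> \<longleftrightarrow> \<sigma> \<inter> uminus ` \<sigma> = {0}"

definition rays :: "(real ^ 'n) set \<Rightarrow> (real ^ 'n) set set" where
  "rays \<sigma> = {\<rho>. \<rho> face_of \<sigma> \<and> dim \<rho> = 1}"

definition ns :: "(real ^ 'n) set \<Rightarrow> int" where
  "ns \<sigma> = int (card (rays \<sigma>)) - int (dim \<sigma>)"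

end

theory Submission imports Defs begin

lemma sum_in_convex_cone:
  assumes "convex_cone S" "finite V" "\<And>v. v \<in> V \<Longrightarrow> c v \<ge> 0" "V \<subseteq> S"
  shows "(\<Sum>v\<in>V. c v *\<^sub>R v) \<in> S"
  using assms(2-4)
proof (induction V rule: finite_induct)
  case empty then show ?case using assms(1) convex_cone_contains_0 by simp
next
  case (insert a F)
  then have "c a *\<^sub>R a \<in> S" using assms(1) by (simp add: convex_cone_def conic_mul)
  moreover have "(\<Sum>v\<in>F. c v *\<^sub>R v) \<in> S" using insert by auto
  ultimately show ?case using insert assms(1) by (simp add: convex_cone_add)
qed

lemma cone_set_eq:
  assumes "finite V"
  shows "{x. \<exists>c. (\<forall>v\<in>V. c v \<ge> 0) \<and> x = (\<Sum>v\<in>V. c v *\<^sub>R v)} = convex_cone hull V"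
    (is "?S = _")
proof
  show "?S \<subseteq> convex_cone hull V"
  proof
    fix x assume "x \<in> ?S"
    then obtain c where c: "\<forall>v\<in>V. c v \<ge> 0" "x = (\<Sum>v\<in>V. c v *\<^sub>R v)" by blast
    show "x \<in> convex_cone hull V" unfolding c(2)
      by (rule sum_in_convex_cone[OF convex_cone_convex_cone_hull assms]) (use c(1) in \<open>auto intro: hull_inc\<close>)
  qed
next
  have "convex_cone ?S"
    unfolding convex_cone_iff
  proof (intro conjI ballI allI impI)
    show "0 \<in> ?S" by (rule CollectI, rule exI[of _ "\<lambda>_. 0"]) simp
  next
    fix x y assume "x \<in> ?S" "y \<in> ?S"
    then obtain c d where c: "\<forall>v\<in>V. c v \<ge> 0" "x = (\<Sum>v\<in>V. c v *\<^sub>R v)"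
      and d: "\<forall>v\<in>V. d v \<ge> 0" "y = (\<Sum>v\<in>V. d v *\<^sub>R v)" by blast
    have e1: "x + y = (\<Sum>v\<in>V. (c v + d v) *\<^sub>R v)"
      using c d by (simp add: scaleR_add_left sum.distrib)
    have e2: "\<forall>v\<in>V. c v + d v \<ge> 0" using c d by auto
    show "x + y \<in> ?S" by (rule CollectI, rule exI[of _ "\<lambda>v. c v + d v"], rule conjI[OF e2 e1])
  next
    fix x and t::real assume "x \<in> ?S" "0 \<le> t"
    then obtain c where c: "\<forall>v\<in>V. c v \<ge> 0" "x = (\<Sum>v\<in>V. c v *\<^sub>R v)" by blast
    have e1: "t *\<^sub>R x = (\<Sum>v\<in>V. (t * c v) *\<^sub>R v)"
      using c by (simp add: scaleR_sum_right)
    have e2: "\<forall>v\<in>V. t * c v \<ge> 0" using c \<open>0 \<le> t\<close> by auto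
    show "t *\<^sub>R x \<in> ?S" by (rule CollectI, rule exI[of _ "\<lambda>v. t * c v"], rule conjI[OF e2 e1])
  qed
  moreover have "V \<subseteq> ?S"
  proof
    fix w assume "w \<in> V"
    show "w \<in> ?S"
    proof (rule CollectI, rule exI[of _ "\<lambda>v. if v = w then 1 else 0"], intro conjI)
      have "(\<Sum>v\<in>V. (if v = w then 1 else 0) *\<^sub>R v) = (\<Sum>v\<in>V. if v = w then v else 0)"
        by (rule sum.cong) auto
      also have "\<dots> = w" using \<open>w \<in> V\<close> assms by (simp add: sum.delta)
      finally show "w = (\<Sum>v\<in>V. (if v = w then 1 else 0) *\<^sub>R v)" by simp
    qed simp
  qed
  ultimately show "convex_cone hull V \<subseteq> ?S" by (rule hull_minimal[rotated])
qed

lemma exit_point: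
  fixes C :: "'a::euclidean_space set"
  assumes cl: "closed C" and co: "conic C" and pt: "\<And>x. x \<in> C \<Longrightarrow> -x \<in> C \<Longrightarrow> x = 0"
    and v: "v \<in> C" "v \<noteq> 0"
  shows "\<exists>s0>0. x - s0 *\<^sub>R v \<notin> C"
proof (rule ccontr)
  assume "\<not> ?thesis"
  then have all: "\<And>s. s > 0 \<Longrightarrow> x - s *\<^sub>R v \<in> C" by blast
  let ?T = "(\<lambda>t. t *\<^sub>R x - v) -` C"
  have clT: "closed ?T"
    by (rule continuous_closed_vimage[OF cl]) (intro continuous_intros)
  have "{0<..1} \<subseteq> ?T"
  proof
    fix t :: real assume "t \<in> {0<..1}"
    then have t: "t > 0" by simp
    have "t *\<^sub>R (x - (1/t) *\<^sub>R v) \<in> C"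
      using conic_mul[OF co all[of "1/t"]] t by simp
    moreover have "t *\<^sub>R (x - (1/t) *\<^sub>R v) = t *\<^sub>R x - v"
      using t by (simp add: scaleR_diff_right)
    ultimately show "t \<in> ?T" by simp
  qed
  then have "closure {0<..(1::real)} \<subseteq> ?T" using clT closure_minimal by blast
  moreover have "(0::real) \<in> closure {0<..1}" by simp
  ultimately have "(0::real) \<in> ?T" by blast
  then have "-v \<in> C" by simp
  then have "-v = 0" using pt[of "-v"] v by simp
  then show False using v by simp
qed

lemma to_rel_boundary:
  fixes C :: "'a::euclidean_space set"
  assumes cl: "closed C" and co: "conic C" and pt: "\<And>x. x \<in> C \<Longrightarrow> -x \<in> C \<Longrightarrow> x = 0"
    and x: "x \<in> C" and v: "v \<in> C" "v \<noteq> 0"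
  shows "\<exists>s\<ge>0. x - s *\<^sub>R v \<in> C - rel_interior C"
proof -
  obtain s0 where s0: "s0 > 0" "x - s0 *\<^sub>R v \<notin> C"
    using exit_point[OF cl co pt v] by blast
  define A where "A = {0..s0} \<inter> (\<lambda>s. x - s *\<^sub>R v) -` C"
  have clA: "closed A" unfolding A_def
    by (intro closed_Int closed_atLeastAtMost continuous_closed_vimage[OF cl]) (intro continuous_intros)
  have "0 \<in> A" using x s0 by (simp add: A_def)
  have bA: "bdd_above A" unfolding A_def by (rule bdd_above_Int1) simp
  define s where "s = Sup A"
  have sA: "s \<in> A" unfolding s_def using closed_contains_Sup[OF _ bA clA] \<open>0 \<in> A\<close> by blast
  then have s: "0 \<le> s" "s \<le> s0" "x - s *\<^sub>R v \<in> C" by (auto simp: A_def)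
  have "s \<noteq> s0" using s s0 by auto
  with s have ss0: "s < s0" by simp
  have "x - s *\<^sub>R v \<notin> rel_interior C"
  proof
    assume "x - s *\<^sub>R v \<in> rel_interior C"
    then obtain e where e: "e > 0" "cball (x - s *\<^sub>R v) e \<inter> affine hull C \<subseteq> C"
      using mem_rel_interior_cball by blast
    define d where "d = min (s0 - s) (e / norm v)"
    have d: "d > 0" "d \<le> s0 - s" "d \<le> e / norm v" using ss0 e v by (auto simp: d_def)
    have "d * norm v \<le> e" using d(3) v by (simp add: field_simps)
    then have "x - (s + d) *\<^sub>R v \<in> cball (x - s *\<^sub>R v) e"
      using d by (simp add: dist_norm algebra_simps)
    moreover have "0 \<in> C" using co v conic_contains_0 by blast
    then have "affine hull C = span C" by (simp add: affine_hull_span_0 hull_inc)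
    then have "x - (s + d) *\<^sub>R v \<in> affine hull C"
      using x v by (simp add: span_diff span_mul span_base)
    ultimately have "x - (s + d) *\<^sub>R v \<in> C" using e by blast
    then have "s + d \<in> A" using d s by (auto simp: A_def)
    then have "s + d \<le> s" unfolding s_def by (rule cSup_upper[OF _ bA])
    then show False using d by simp
  qed
  then show ?thesis using s by blast
qed

lemma span_boundary:
  fixes C :: "'a::euclidean_space set"
  assumes cl: "closed C" and co: "conic C" and pt: "\<And>x. x \<in> C \<Longrightarrow> -x \<in> C \<Longrightarrow> x = 0"
    and d: "dim C \<ge> 2" and x: "x \<in> C"
  shows "x \<in> span (C - rel_interior C)"
proof (cases "x = 0")
  case True then show ?thesis by (simp add: span_zero)
next
  case False
  have "\<exists>u\<in>C. u \<notin> span {x}"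
  proof (rule ccontr)
    assume "\<not> ?thesis"
    then have "C \<subseteq> span {x}" by blast
    then have "dim C \<le> dim (span {x})" by (rule dim_subset)
    then have "dim C \<le> 1" using False by simp
    then show False using d by simp
  qed
  then obtain u where u: "u \<in> C" "u \<notin> span {x}" by blast
  obtain s where s: "s \<ge> 0" "u - s *\<^sub>R x \<in> C - rel_interior C"
    using to_rel_boundary[OF cl co pt u(1) x False] by blast
  define p where "p = u - s *\<^sub>R x"
  have "p \<notin> span {x}"
  proof
    assume "p \<in> span {x}"
    then have "p + s *\<^sub>R x \<in> span {x}" by (simp add: span_add span_mul span_base)
    then show False using u by (simp add: p_def)
  qed
  then have p0: "p \<noteq> 0" by (auto simp: span_zero)
  have pC: "p \<in> C - rel_interior C" using s by (simp add: p_def)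
  obtain t where t: "t \<ge> 0" "x - t *\<^sub>R p \<in> C - rel_interior C"
    using to_rel_boundary[OF cl co pt x _ p0] pC by blast
  have "x = (x - t *\<^sub>R p) + t *\<^sub>R p" by simp
  also have "\<dots> \<in> span (C - rel_interior C)"
    using t pC by (intro span_add span_mul span_base) auto
  finally show ?thesis .
qed


lemma rays_face:
  assumes "T face_of S"
  shows "rays T = {r \<in> rays S. r \<subseteq> T}"
  using face_of_face[OF assms] by (auto simp: rays_def)

lemma cone_span_rays:
  fixes C :: "(real ^ 'n) set"
  assumes "polyhedron C" "conic C" "\<And>x. x \<in> C \<Longrightarrow> -x \<in> C \<Longrightarrow> x = 0"
  shows "C \<subseteq> span (\<Union>(rays C))"
  using assms
proof (induction "dim C" arbitrary: C rule: less_induct)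
  case less
  have cvx: "convex C" using less.prems(1) by (rule polyhedron_imp_convex)
  have "dim C = 0 \<or> dim C = 1 \<or> dim C \<ge> 2" by presburger
  then consider "dim C = 0" | "dim C = 1" | "dim C \<ge> 2" by (elim disjE) simp_all
  then show ?case
  proof cases
    case 1
    then have "C \<subseteq> {0}" by simp
    then show ?thesis by (auto simp: span_zero)
  next
    case 2
    then have "C \<in> rays C" using cvx face_of_refl[OF cvx] unfolding rays_def by (intro CollectI conjI)
    then show ?thesis using span_superset[of "\<Union>(rays C)"] by (meson Union_upper subset_trans)
  next
    case 3
    have sub: "C - rel_interior C \<subseteq> span (\<Union>(rays C))"
    proof
      fix y assume "y \<in> C - rel_interior C"
      then obtain F where F: "F facet_of C" "y \<in> F"
        using rel_boundary_of_polyhedron[OF less.prems(1)] by blast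
      have Ff: "F face_of C" using F(1) by (rule facet_of_imp_face_of)
      have Fne: "F \<noteq> C" using F(1) by auto
      have "F \<noteq> {}" using F(2) by auto
      have coF: "conic F" using face_of_conic[OF less.prems(2) Ff] .
      have "0 \<in> F" using coF \<open>F \<noteq> {}\<close> conic_contains_0 by blast
      have "0 \<in> C" using Ff \<open>0 \<in> F\<close> face_of_imp_subset by blast
      have "aff_dim F < aff_dim C" using face_of_aff_dim_lt[OF cvx Ff Fne] .
      then have dlt: "dim F < dim C"
        using aff_dim_zero[of F] aff_dim_zero[of C] \<open>0 \<in> F\<close> \<open>0 \<in> C\<close> by (simp add: hull_inc)
      have "F \<subseteq> span (\<Union>(rays F))"
      proof (rule less.hyps[OF dlt])
        show "polyhedron F" using face_of_polyhedron_polyhedron[OF less.prems(1) Ff] .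
        show "conic F" by (fact coF)
        show "\<And>x. x \<in> F \<Longrightarrow> -x \<in> F \<Longrightarrow> x = 0"
          using less.prems(3) face_of_imp_subset[OF Ff] by (meson subsetD)
      qed
      moreover have "\<Union>(rays F) \<subseteq> \<Union>(rays C)" using rays_face[OF Ff] by auto
      ultimately have "F \<subseteq> span (\<Union>(rays C))" using span_mono by (meson subset_trans)
      then show "y \<in> span (\<Union>(rays C))" using F(2) by (rule subsetD)
    qed
    show ?thesis
    proof
      fix x assume "x \<in> C"
      have "x \<in> span (C - rel_interior C)"
        by (rule span_boundary[OF polyhedron_imp_closed[OF less.prems(1)] less.prems(2) less.prems(3) 3 \<open>x \<in> C\<close>])
      also have "span (C - rel_interior C) \<subseteq> span (\<Union>(rays C))"
        using sub by (simp add: span_minimal subspace_span)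
      finally show "x \<in> span (\<Union>(rays C))" .
    qed
  qed
qed

lemma dim_Un_le:
  fixes X Y Z :: "(real ^ 'n) set"
  assumes "Z \<subseteq> span X" "Z \<subseteq> span Y"
  shows "dim (X \<union> Y) + dim Z \<le> dim X + dim Y"
proof -
  have "dim (X \<union> Y) = dim (span (X \<union> Y))" by simp
  also have "span (X \<union> Y) = {x + y |x y. x \<in> span X \<and> y \<in> span Y}" by (rule span_Un)
  finally have "dim (X \<union> Y) = dim {x + y |x y. x \<in> span X \<and> y \<in> span Y}" .
  moreover have "dim Z \<le> dim (span X \<inter> span Y)" using assms by (intro dim_subset) auto
  moreover have "dim {x + y |x y. x \<in> span X \<and> y \<in> span Y} + dim (span X \<inter> span Y) = dim X + dim Y"
    using dim_sums_Int[OF subspace_span subspace_span, of X Y] by simp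
  ultimately show ?thesis by linarith
qed

definition nul :: "(real ^ 'n) set set \<Rightarrow> int" where
  "nul A = int (card A) - int (dim (\<Union>A))"

lemma nul_mono_aux:
  fixes A D :: "(real ^ 'n) set set"
  assumes "finite D" "finite A" "\<And>r. r \<in> D \<Longrightarrow> dim r = 1"
  shows "nul A \<le> nul (A \<union> D)"
  using assms
proof (induction D rule: finite_induct)
  case empty then show ?case by simp
next
  case (insert r D)
  show ?case
  proof (cases "r \<in> A \<union> D")
    case True
    then have "A \<union> insert r D = A \<union> D" by auto
    then show ?thesis using insert by auto
  next
    case False
    have c: "card (A \<union> insert r D) = card (A \<union> D) + 1"
      using False insert by simp
    have "dim (r \<union> \<Union>(A \<union> D)) + dim ({}::(real^'n) set) \<le> dim r + dim (\<Union>(A \<union> D))"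
      by (rule dim_Un_le) auto
    moreover have "\<Union>(A \<union> insert r D) = r \<union> \<Union>(A \<union> D)" by auto
    ultimately have "dim (\<Union>(A \<union> insert r D)) \<le> dim (\<Union>(A \<union> D)) + 1" using insert by simp
    then show ?thesis using insert c by (simp add: nul_def)
  qed
qed

lemma nul_mono:
  fixes A B :: "(real ^ 'n) set set"
  assumes "A \<subseteq> B" "finite B" "\<And>r. r \<in> B \<Longrightarrow> dim r = 1"
  shows "nul A \<le> nul B"
proof -
  have "A \<union> (B - A) = B" using assms by auto
  then show ?thesis using nul_mono_aux[of "B - A" A] assms finite_subset by fastforce
qed

lemma nul_supermod:
  fixes A B :: "(real ^ 'n) set set"
  assumes "finite A" "finite B"
  shows "nul A + nul B \<le> nul (A \<union> B) + nul (A \<inter> B)"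
proof -
  have c: "card (A \<union> B) + card (A \<inter> B) = card A + card B" using card_Un_Int[OF assms] by simp
  have "dim (\<Union>A \<union> \<Union>B) + dim (\<Union>(A \<inter> B)) \<le> dim (\<Union>A) + dim (\<Union>B)"
    by (rule dim_Un_le) (auto intro: span_base)
  moreover have "\<Union>(A \<union> B) = \<Union>A \<union> \<Union>B" by auto
  ultimately have d: "int (dim (\<Union>(A \<union> B))) + int (dim (\<Union>(A \<inter> B))) \<le> int (dim (\<Union>A)) + int (dim (\<Union>B))"
    by (metis of_nat_add of_nat_le_iff)
  have c': "int (card (A \<union> B)) + int (card (A \<inter> B)) = int (card A) + int (card B)"
    using c by (metis of_nat_add)
  show ?thesis using c' d unfolding nul_def by linarith
qed

lemma dim_face_rays:
  fixes \<tau> :: "(real ^ 'n) set"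
  assumes "polyhedron \<tau>" "conic \<tau>" "\<And>x. x \<in> \<tau> \<Longrightarrow> -x \<in> \<tau> \<Longrightarrow> x = 0"
  shows "ns \<tau> = nul (rays \<tau>)"
proof -
  have s1: "\<Union>(rays \<tau>) \<subseteq> \<tau>" by (auto simp: rays_def dest: face_of_imp_subset)
  have s2: "\<tau> \<subseteq> span (\<Union>(rays \<tau>))" by (rule cone_span_rays[OF assms])
  have "dim \<tau> \<le> dim (span (\<Union>(rays \<tau>)))" using s2 by (rule dim_subset)
  moreover have "dim (\<Union>(rays \<tau>)) \<le> dim \<tau>" using s1 by (rule dim_subset)
  ultimately have "dim \<tau> = dim (\<Union>(rays \<tau>))" by simp
  then show ?thesis by (simp add: ns_def nul_def)
qed

theorem lemma3p2:
  fixes \<sigma> :: "(real ^ 'n) set"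
  assumes "rat_poly_cone \<sigma>" and "strongly_convex \<sigma>" and "ns \<sigma> > 0"
  shows "\<exists>!\<tau>. \<tau> face_of \<sigma> \<and> ns \<tau> = ns \<sigma> \<and>
           (\<forall>\<tau>'. \<tau>' face_of \<sigma> \<and> ns \<tau>' = ns \<sigma> \<and> \<tau>' \<subseteq> \<tau> \<longrightarrow> \<tau>' = \<tau>)"
proof -
  obtain V where V: "finite V"
    "\<sigma> = {x. \<exists>c. (\<forall>v\<in>V. c v \<ge> 0) \<and> x = (\<Sum>v\<in>V. c v *\<^sub>R v)}"
    using assms(1) unfolding rat_poly_cone_def by blast
  have seq: "\<sigma> = convex_cone hull V" using V cone_set_eq by blast
  have poly: "polyhedron \<sigma>" unfolding seq by (rule polyhedron_convex_cone_hull[OF V(1)])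
  have con: "conic \<sigma>" unfolding seq by (rule conic_convex_cone_hull)
  have cvx: "convex \<sigma>" unfolding seq by (rule convex_convex_cone_hull)
  have pt: "\<And>x. x \<in> \<sigma> \<Longrightarrow> -x \<in> \<sigma> \<Longrightarrow> x = 0"
  proof -
    fix x assume x: "x \<in> \<sigma>" "-x \<in> \<sigma>"
    then have "x \<in> uminus ` \<sigma>" by (metis image_eqI minus_minus)
    then have "x \<in> \<sigma> \<inter> uminus ` \<sigma>" using x by blast
    then show "x = 0" using assms(2) unfolding strongly_convex_def by blast
  qed
  have faceprops: "polyhedron \<tau> \<and> conic \<tau> \<and> (\<forall>x. x \<in> \<tau> \<longrightarrow> -x \<in> \<tau> \<longrightarrow> x = 0)"
    if "\<tau> face_of \<sigma>" for \<tau>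
    using face_of_polyhedron_polyhedron[OF poly that] face_of_conic[OF con that]
      pt face_of_imp_subset[OF that] by blast
  have nsface: "ns \<tau> = nul (rays \<tau>)" if "\<tau> face_of \<sigma>" for \<tau>
    using faceprops[OF that] dim_face_rays by blast
  define RS where "RS = rays \<sigma>"
  have finF: "finite {F. F face_of \<sigma>}" by (rule finite_polyhedron_faces[OF poly])
  have finRS: "finite RS" unfolding RS_def rays_def
    by (rule finite_subset[OF _ finF]) blast
  have dimRS: "\<And>r. r \<in> RS \<Longrightarrow> dim r = 1" by (simp add: RS_def rays_def)
  have raysub: "rays \<tau> = {r \<in> RS. r \<subseteq> \<tau>}" if "\<tau> face_of \<sigma>" for \<tau>
    unfolding RS_def by (rule rays_face[OF that])
  define N where "N = ns \<sigma>"
  have NRS: "N = nul RS" unfolding N_def RS_def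
    by (rule nsface[OF face_of_refl[OF cvx]])
  define Fam where "Fam = {\<tau>. \<tau> face_of \<sigma> \<and> ns \<tau> = N}"
  have finFam: "finite Fam" unfolding Fam_def by (rule finite_subset[OF _ finF]) blast
  have sigFam: "\<sigma> \<in> Fam" unfolding Fam_def N_def using face_of_refl[OF cvx] by blast
  have intFam: "t1 \<inter> t2 \<in> Fam" if "t1 \<in> Fam" "t2 \<in> Fam" for t1 t2
  proof -
    have f1: "t1 face_of \<sigma>" and n1: "ns t1 = N" using that by (auto simp: Fam_def)
    have f2: "t2 face_of \<sigma>" and n2: "ns t2 = N" using that by (auto simp: Fam_def)
    have f12: "(t1 \<inter> t2) face_of \<sigma>" by (rule face_of_Int[OF f1 f2])
    define A where "A = rays t1"
    define B where "B = rays t2"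
    have AB: "rays (t1 \<inter> t2) = A \<inter> B"
      unfolding A_def B_def raysub[OF f12] raysub[OF f1] raysub[OF f2] by blast
    have ARS: "A \<subseteq> RS" and BRS: "B \<subseteq> RS"
      unfolding A_def B_def raysub[OF f1] raysub[OF f2] by auto
    have finA: "finite A" and finB: "finite B"
      using ARS BRS finRS finite_subset by auto
    have nA: "nul A = N" using n1 nsface[OF f1] by (simp add: A_def)
    have nB: "nul B = N" using n2 nsface[OF f2] by (simp add: B_def)
    have "nul A + nul B \<le> nul (A \<union> B) + nul (A \<inter> B)" by (rule nul_supermod[OF finA finB])
    moreover have "nul (A \<union> B) \<le> nul RS" using ARS BRS finRS dimRS by (intro nul_mono) auto
    moreover have "nul (A \<inter> B) \<le> nul RS" using ARS finRS dimRS by (intro nul_mono) auto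
    ultimately have "nul (A \<inter> B) = N" using nA nB NRS by linarith
    then have "ns (t1 \<inter> t2) = N" using nsface[OF f12] AB by simp
    then show ?thesis using f12 by (simp add: Fam_def)
  qed
  obtain m where m: "m \<in> Fam" "\<And>b. b \<in> Fam \<Longrightarrow> b \<subseteq> m \<Longrightarrow> m = b"
    using finite_has_minimal[OF finFam] sigFam by blast
  show ?thesis
  proof (rule ex1I[of _ m])
    show "m face_of \<sigma> \<and> ns m = ns \<sigma> \<and>
           (\<forall>\<tau>'. \<tau>' face_of \<sigma> \<and> ns \<tau>' = ns \<sigma> \<and> \<tau>' \<subseteq> m \<longrightarrow> \<tau>' = m)"
      using m by (auto simp: Fam_def N_def)
  next
    fix \<tau> assume P: "\<tau> face_of \<sigma> \<and> ns \<tau> = ns \<sigma> \<and>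
           (\<forall>\<tau>'. \<tau>' face_of \<sigma> \<and> ns \<tau>' = ns \<sigma> \<and> \<tau>' \<subseteq> \<tau> \<longrightarrow> \<tau>' = \<tau>)"
    then have tF: "\<tau> \<in> Fam" by (simp add: Fam_def N_def)
    have iF: "\<tau> \<inter> m \<in> Fam" by (rule intFam[OF tF m(1)])
    then have "\<tau> \<inter> m = \<tau>" using P by (auto simp: Fam_def N_def)
    moreover have "m = \<tau> \<inter> m" using m(2)[OF iF] by blast
    ultimately show "\<tau> = m" by simp
  qed
qed

end
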